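(* Assume hypotheses (A1)–(A4) below. Let $\sigma_n\to\infty$ and $h_n\to0$ (with $h_n\in(0,h_0]$) as $n\to\infty$. Then the functionals $\mathcal E_{\sigma_n,h_n}$ $\Gamma$-converge as $n\to\infty$ in the strong topology of $\mathcal T_0$ to $\overline{\mathcal E}_\infty$.
   Context: Let $\{\mathcal T_\sigma\}_{\sigma\in\mathbb R\cup\{\pm\infty\}}$ be reflexive Banach spaces with norms $\|\cdot\|_{\mathcal T_\sigma}$, $\mathcal T_{-\sigma}:=\mathcal T_\sigma^*$, and $\mathcal T_\sigma\subset\mathcal T_0$ for $\sigma\in(0,\infty]$. Limits "as $\sigma\to\infty$" refer to arbitrary sequences $\sigma_n\to\infty$. (A1) (i) There is $M_1>0$ independent of $\sigma$ with $M_1\|u\|_{\mathcal T_0}\le\|u\|_{\mathcal T_\sigma}$ for all $\sigma\in(0,\infty]$, $u\in\mathcal T_\sigma$. (ii) If $v_\sigma\in\mathcal T_\sigma$ with $\|v_\sigma\|_{\mathcal T_\sigma}\le C$ ($C$ independent of $\sigma$), then $\{v_\sigma\}$ is relatively compact in $\mathcal T_0$ as $\sigma\to\infty$ and each limit point lies in $\mathcal T_\infty$. (A2) For each $\sigma\in(0,\infty]$, $\mathcal E_\sigma:\mathcal T_\sigma\to[0,\infty)$ is weakly lower semicontinuous on $\mathcal T_\sigma$, and: (i) there is $\varphi\in C^0([0,\infty)^2)$ with $|\mathcal E_\sigma(u)-\mathcal E_\sigma(v)|\le\varphi(\|u\|_{\mathcal T_\sigma},\|v\|_{\mathcal T_\sigma})\|u-v\|_{\mathcal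 T_\sigma}$ for all $u,v\in\mathcal T_\sigma$; (ii) there exist $p\in(1,\infty)$, $\alpha>0$, $\psi\in C^0([0,\infty))$ with $\psi(t)/t^p\to0$ as $t\to\infty$, independent of $\sigma$, with $\alpha\|u\|^p_{\mathcal T_\sigma}\le\mathcal E_\sigma(u)+\psi(\|u\|_{\mathcal T_\sigma})$. (A3) With $\overline{\mathcal E}_\sigma:\mathcal T_0\to[0,\infty]$ equal to $\mathcal E_\sigma$ on $\mathcal T_\sigma$ and $+\infty$ on $\mathcal T_0\setminus\mathcal T_\sigma$ ($\sigma\in(0,\infty]$), $\overline{\mathcal E}_\sigma$ $\Gamma$-converges to $\overline{\mathcal E}_\infty$ as $\sigma\to\infty$ in the strong topology of $\mathcal T_0$. (A4) For $\sigma\in(0,\infty]$, $h\in(0,h_0]$, $W_{\sigma,h}\subset\mathcal T_\sigma$ are finite-dimensional subspaces such that for each $h$ the span of $\bigcup_{\sigma\in(0,\infty]}W_{\sigma,h}$ is finite-dimensional, and: (i) for every $\sigma\in(0,\infty]$ and $u\in\mathcal T_\sigma$ there exist $h_n\to0$ and $u_n\in W_{\sigma,h_n}$ with $\|u-u_n\|_{\mathcal T_\sigma}\to0$; (ii) for each $h\in(0,h_0]$, $W_{\infty,h}=\mathcal T_\infty\cap\bigcup_{\sigma\in(0,\infty]}W_{\sigma,h}$; (iii) with $W_{\infty,0}:=\mathcal T_\infty$: for every $h\in[0,h_0]$, every $v\in W_{\infty,h}$ and every sequence $(\sigma_n,h_n)$ with $\sigma_n\to\infty$, $h_n\in(0,h_0]$,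 and $h_n=h$ for all $n$ if $h>0$, $h_n\to0$ if $h=0$, there exist $v_{\sigma_n}\in\mathcal T_{\sigma_n}$ with $\|v_{\sigma_n}-v\|_{\mathcal T_0}\to0$ and $\mathcal E_{\sigma_n}(v_{\sigma_n})\to\mathcal E_\infty(v)$, and $v_n\in W_{\sigma_n,h_n}$ with $\|v_n-v_{\sigma_n}\|_{\mathcal T_{\sigma_n}}\to0$. Define $\mathcal E_{\sigma,h}:\mathcal T_0\to[0,\infty]$ by $\mathcal E_{\sigma,h}=\mathcal E_\sigma$ on $W_{\sigma,h}$ and $+\infty$ on $\mathcal T_0\setminus W_{\sigma,h}$. $\Gamma$-convergence of $I_n$ to $I$ in a topology means: (1) $I(v)\le\liminf I_n(v_n)$ whenever $v_n\to v$; (2) for each $v$ there is $v_n\to v$ with $\limsup I_n(v_n)\le I(v)$. *)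

theory Defs
  imports "HOL-Analysis.Analysis"
begin

text \<open>The ambient Banach space \<T>_0 is the type 'a (class banach, with its norm).
  For \<sigma> \<in> (0,\<infinity>] (indexed by ereal) the space \<T>_\<sigma> is a linear subspace T \<sigma> of 'a
  carrying its own norm N \<sigma>. Only the values for \<sigma> \<in> (0,\<infinity>] are used.\<close>

definition normed_subspace :: "'a::real_vector set \<Rightarrow> ('a \<Rightarrow> real) \<Rightarrow> bool" where
  "normed_subspace S N \<longleftrightarrow> subspace S \<and> (\<forall>x\<in>S. 0 \<le> N x) \<and> (\<forall>x\<in>S. N x = 0 \<longleftrightarrow> x = 0)
     \<and> (\<forall>x\<in>S. \<forall>y\<in>S. N (x + y) \<le> N x + N y) \<and> (\<forall>x\<in>S. \<forall>c. N (c *\<^sub>R x) = \<bar>c\<bar> * N x)"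

definition complete_wrt :: "'a::real_vector set \<Rightarrow> ('a \<Rightarrow> real) \<Rightarrow> bool" where
  "complete_wrt S N \<longleftrightarrow> (\<forall>X. (\<forall>n. X n \<in> S) \<and> (\<forall>e>0. \<exists>M. \<forall>m\<ge>M. \<forall>n\<ge>M. N (X m - X n) < e)
      \<longrightarrow> (\<exists>x\<in>S. (\<lambda>n. N (X n - x)) \<longlonglongrightarrow> 0))"

definition banach_subspace :: "'a::real_vector set \<Rightarrow> ('a \<Rightarrow> real) \<Rightarrow> bool" where
  "banach_subspace S N \<longleftrightarrow> normed_subspace S N \<and> complete_wrt S N"

definition dual_space :: "'a::real_vector set \<Rightarrow> ('a \<Rightarrow> real) \<Rightarrow> ('a \<Rightarrow> real) set" where
  "dual_space S N = {f. (\<forall>x\<in>S. \<forall>y\<in>S. f (x + y) = f x + f y) \<and> (\<forall>x\<in>S. \<forall>c. f (c *\<^sub>R x) = c * f x)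
      \<and> (\<exists>C. \<forall>x\<in>S. \<bar>f x\<bar> \<le> C * N x) \<and> (\<forall>x. x \<notin> S \<longrightarrow> f x = 0)}"

definition dual_norm :: "'a::real_vector set \<Rightarrow> ('a \<Rightarrow> real) \<Rightarrow> ('a \<Rightarrow> real) \<Rightarrow> real" where
  "dual_norm S N f = Sup {\<bar>f x\<bar> | x. x \<in> S \<and> N x \<le> 1}"

definition reflexive_wrt :: "'a::real_vector set \<Rightarrow> ('a \<Rightarrow> real) \<Rightarrow> bool" where
  "reflexive_wrt S N \<longleftrightarrow> (\<forall>\<Phi> :: ('a \<Rightarrow> real) \<Rightarrow> real.
     ((\<forall>f\<in>dual_space S N. \<forall>g\<in>dual_space S N. \<Phi> (\<lambda>x. f x + g x) = \<Phi> f + \<Phi> g)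
      \<and> (\<forall>f\<in>dual_space S N. \<forall>c. \<Phi> (\<lambda>x. c * f x) = c * \<Phi> f)
      \<and> (\<exists>C. \<forall>f\<in>dual_space S N. \<bar>\<Phi> f\<bar> \<le> C * dual_norm S N f))
     \<longrightarrow> (\<exists>x\<in>S. \<forall>f\<in>dual_space S N. \<Phi> f = f x))"

definition weakly_lsc_on :: "'a::real_vector set \<Rightarrow> ('a \<Rightarrow> real) \<Rightarrow> ('a \<Rightarrow> real) \<Rightarrow> bool" where
  "weakly_lsc_on S N E \<longleftrightarrow> (\<forall>u X. u \<in> S \<and> (\<forall>n. X n \<in> S)
      \<and> (\<forall>f\<in>dual_space S N. (\<lambda>n. f (X n)) \<longlonglongrightarrow> f u)
      \<longrightarrow> ereal (E u) \<le> liminf (\<lambda>n. ereal (E (X n))))"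

definition ext_infty :: "'a set \<Rightarrow> ('a \<Rightarrow> real) \<Rightarrow> 'a \<Rightarrow> ereal" where
  "ext_infty S E v = (if v \<in> S then ereal (E v) else \<infinity>)"

definition gamma_converges :: "(nat \<Rightarrow> 'a::real_normed_vector \<Rightarrow> ereal) \<Rightarrow> ('a \<Rightarrow> ereal) \<Rightarrow> bool" where
  "gamma_converges I I0 \<longleftrightarrow>
     (\<forall>v vs. vs \<longlonglongrightarrow> v \<longrightarrow> I0 v \<le> liminf (\<lambda>n. I n (vs n)))
   \<and> (\<forall>v. \<exists>vs. vs \<longlonglongrightarrow> v \<and> limsup (\<lambda>n. I n (vs n)) \<le> I0 v)"

definition to_infty :: "(nat \<Rightarrow> real) \<Rightarrow> bool" where
  "to_infty s \<longleftrightarrow> (\<forall>n. 0 < s n) \<and> filterlim s at_top sequentially"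

definition setting :: "(ereal \<Rightarrow> 'a::banach set) \<Rightarrow> (ereal \<Rightarrow> 'a \<Rightarrow> real) \<Rightarrow> bool" where
  "setting T N \<longleftrightarrow> reflexive_wrt (UNIV::'a set) norm
     \<and> (\<forall>\<sigma>>0. banach_subspace (T \<sigma>) (N \<sigma>) \<and> reflexive_wrt (T \<sigma>) (N \<sigma>))"

definition hypA1 :: "(ereal \<Rightarrow> 'a::banach set) \<Rightarrow> (ereal \<Rightarrow> 'a \<Rightarrow> real) \<Rightarrow> bool" where
  "hypA1 T N \<longleftrightarrow>
     (\<exists>M1>0. \<forall>\<sigma>>0. \<forall>u\<in>T \<sigma>. M1 * norm u \<le> N \<sigma> u)
   \<and> (\<forall>s v C. to_infty s \<and> (\<forall>n. v n \<in> T (ereal (s n)) \<and> N (ereal (s n)) (v n) \<le> C) \<longrightarrow>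
        (\<exists>r w. strict_mono r \<and> (v \<circ> r) \<longlonglongrightarrow> w)
      \<and> (\<forall>r w. strict_mono r \<and> (v \<circ> r) \<longlonglongrightarrow> w \<longrightarrow> w \<in> T \<infinity>))"

definition hypA2 :: "(ereal \<Rightarrow> 'a::banach set) \<Rightarrow> (ereal \<Rightarrow> 'a \<Rightarrow> real) \<Rightarrow> (ereal \<Rightarrow> 'a \<Rightarrow> real) \<Rightarrow> bool" where
  "hypA2 T N E \<longleftrightarrow>
     (\<forall>\<sigma>>0. (\<forall>u\<in>T \<sigma>. 0 \<le> E \<sigma> u) \<and> weakly_lsc_on (T \<sigma>) (N \<sigma>) (E \<sigma>))
   \<and> (\<exists>\<phi>::real \<Rightarrow> real \<Rightarrow> real. continuous_on ({0..} \<times> {0..}) (\<lambda>(s, t). \<phi> s t)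
        \<and> (\<forall>\<sigma>>0. \<forall>u\<in>T \<sigma>. \<forall>v\<in>T \<sigma>. \<bar>E \<sigma> u - E \<sigma> v\<bar> \<le> \<phi> (N \<sigma> u) (N \<sigma> v) * N \<sigma> (u - v)))
   \<and> (\<exists>p \<alpha> (\<psi>::real \<Rightarrow> real). 1 < p \<and> 0 < \<alpha> \<and> continuous_on {0..} \<psi>
        \<and> ((\<lambda>t. \<psi> t / t powr p) \<longlongrightarrow> 0) at_top
        \<and> (\<forall>\<sigma>>0. \<forall>u\<in>T \<sigma>. \<alpha> * N \<sigma> u powr p \<le> E \<sigma> u + \<psi> (N \<sigma> u)))"

definition hypA3 :: "(ereal \<Rightarrow> 'a::banach set) \<Rightarrow> (ereal \<Rightarrow> 'a \<Rightarrow> real) \<Rightarrow> bool" where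
  "hypA3 T E \<longleftrightarrow> (\<forall>s. to_infty s \<longrightarrow>
     gamma_converges (\<lambda>n. ext_infty (T (ereal (s n))) (E (ereal (s n)))) (ext_infty (T \<infinity>) (E \<infinity>)))"

definition findim :: "'a::real_vector set \<Rightarrow> bool" where
  "findim S \<longleftrightarrow> (\<exists>B. finite B \<and> span S = span B)"

definition hypA4 :: "(ereal \<Rightarrow> 'a::banach set) \<Rightarrow> (ereal \<Rightarrow> 'a \<Rightarrow> real) \<Rightarrow> (ereal \<Rightarrow> 'a \<Rightarrow> real)
    \<Rightarrow> (ereal \<Rightarrow> real \<Rightarrow> 'a set) \<Rightarrow> real \<Rightarrow> bool" where
  "hypA4 T N E W h0 \<longleftrightarrow> 0 < h0
   \<and> (\<forall>\<sigma>>0. \<forall>h\<in>{0<..h0}. subspace (W \<sigma> h) \<and> findim (W \<sigma> h) \<and> W \<sigma> h \<subseteq> T \<sigma>)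
   \<and> (\<forall>h\<in>{0<..h0}. findim (\<Union>\<sigma>\<in>{0<..}. W \<sigma> h))
   \<and> (\<forall>\<sigma>>0. \<forall>u\<in>T \<sigma>. \<exists>hs us. (\<forall>n. hs n \<in> {0<..h0} \<and> us n \<in> W \<sigma> (hs n)) \<and> hs \<longlonglongrightarrow> 0
        \<and> (\<lambda>n. N \<sigma> (u - us n)) \<longlonglongrightarrow> 0)
   \<and> (\<forall>h\<in>{0<..h0}. W \<infinity> h = T \<infinity> \<inter> (\<Union>\<sigma>\<in>{0<..}. W \<sigma> h))
   \<and> (\<forall>h\<in>{0..h0}. \<forall>v\<in>(if h = 0 then T \<infinity> else W \<infinity> h). \<forall>s hs.
        to_infty s \<and> (\<forall>n. hs n \<in> {0<..h0})
        \<and> (h > 0 \<longrightarrow> (\<forall>n. hs n = h)) \<and> (h = 0 \<longrightarrow> hs \<longlonglongrightarrow> 0) \<longrightarrow>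
        (\<exists>v\<sigma> vn. (\<forall>n. v\<sigma> n \<in> T (ereal (s n))) \<and> (\<lambda>n. norm (v\<sigma> n - v)) \<longlonglongrightarrow> 0
           \<and> (\<lambda>n. E (ereal (s n)) (v\<sigma> n)) \<longlonglongrightarrow> E \<infinity> v
           \<and> (\<forall>n. vn n \<in> W (ereal (s n)) (hs n))
           \<and> (\<lambda>n. N (ereal (s n)) (vn n - v\<sigma> n)) \<longlonglongrightarrow> 0))"

definition E_disc :: "(ereal \<Rightarrow> 'a \<Rightarrow> real) \<Rightarrow> (ereal \<Rightarrow> real \<Rightarrow> 'a set) \<Rightarrow> ereal \<Rightarrow> real \<Rightarrow> 'a \<Rightarrow> ereal" where
  "E_disc E W \<sigma> h = ext_infty (W \<sigma> h) (E \<sigma>)"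

end

theory Submission
  imports Defs
begin

lemma coerc_bound:
  fixes \<psi> :: "real \<Rightarrow> real"
  assumes p: "1 < p" and a: "0 < \<alpha>" and lim: "((\<lambda>t. \<psi> t / t powr p) \<longlongrightarrow> 0) at_top"
  shows "\<exists>R. \<forall>t K. 0 \<le> t \<longrightarrow> \<alpha> * t powr p \<le> K + \<psi> t \<longrightarrow> t \<le> max R (2 * K / \<alpha>)"
proof -
  have a2: "0 < \<alpha>/2" using a by simp
  have "eventually (\<lambda>t. dist (\<psi> t / t powr p) 0 < \<alpha>/2) at_top"
    by (rule tendstoD[OF lim a2])
  then obtain R0 where R0: "\<And>t. t \<ge> R0 \<Longrightarrow> dist (\<psi> t / t powr p) 0 < \<alpha>/2"
    unfolding eventually_at_top_linorder by blast
  define R where "R = max R0 1"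
  have "t \<le> max R (2 * K / \<alpha>)" if t: "0 \<le> t" "\<alpha> * t powr p \<le> K + \<psi> t" for t K
  proof (cases "t \<le> R")
    case True then show ?thesis by simp
  next
    case False
    then have t1: "t \<ge> 1" "t \<ge> R0" unfolding R_def by auto
    have tp: "t powr p > 0" using t1 by simp
    have "\<bar>\<psi> t / t powr p\<bar> < \<alpha>/2" using R0[OF t1(2)] by (simp add: dist_real_def)
    then have "\<psi> t / t powr p < \<alpha>/2" by linarith
    then have "\<psi> t < \<alpha>/2 * t powr p" using tp by (simp add: divide_less_eq)
    then have "\<alpha>/2 * t powr p \<le> K" using t(2) by linarith
    then have "t powr p \<le> 2 * K / \<alpha>" using a by (simp add: pos_le_divide_eq mult.commute)
    moreover have "t powr 1 \<le> t powr p" using t1 p by (intro powr_mono) auto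
    ultimately show ?thesis using t1 by simp
  qed
  then show ?thesis by blast
qed

lemma ns_nonneg: "normed_subspace S N \<Longrightarrow> x \<in> S \<Longrightarrow> 0 \<le> N x"
  unfolding normed_subspace_def by (elim conjE) (erule bspec)
lemma ns_tri: "normed_subspace S N \<Longrightarrow> x \<in> S \<Longrightarrow> y \<in> S \<Longrightarrow> N (x + y) \<le> N x + N y"
  unfolding normed_subspace_def by (elim conjE) (simp only:)
lemma ns_sub: "normed_subspace S N \<Longrightarrow> subspace S"
  unfolding normed_subspace_def by (elim conjE)

theorem theorem2p13:
  fixes T :: "ereal \<Rightarrow> 'a::banach set" and N E :: "ereal \<Rightarrow> 'a \<Rightarrow> real"
    and W :: "ereal \<Rightarrow> real \<Rightarrow> 'a set" and h0 :: real
    and s hs :: "nat \<Rightarrow> real"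
  assumes "setting T N"
    and "hypA1 T N" and "hypA2 T N E" and "hypA3 T E" and "hypA4 T N E W h0"
    and "to_infty s" and "hs \<longlonglongrightarrow> 0" and "\<forall>n. hs n \<in> {0<..h0}"
  shows "gamma_converges (\<lambda>n. E_disc E W (ereal (s n)) (hs n)) (ext_infty (T \<infinity>) (E \<infinity>))"
proof -
  have spos: "\<And>n. 0 < s n" using assms(6) by (simp add: to_infty_def)
  have A4a: "\<forall>\<sigma>>0. \<forall>h\<in>{0<..h0}. subspace (W \<sigma> h) \<and> findim (W \<sigma> h) \<and> W \<sigma> h \<subseteq> T \<sigma>"
    using assms(5) unfolding hypA4_def by (elim conjE)
  have WT: "\<And>n. W (ereal (s n)) (hs n) \<subseteq> T (ereal (s n))"
    using A4a spos assms(8) by simp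
  have A1a: "\<forall>\<sigma>>0. banach_subspace (T \<sigma>) (N \<sigma>) \<and> reflexive_wrt (T \<sigma>) (N \<sigma>)"
    using assms(1) unfolding setting_def by (elim conjE)
  have NS: "\<And>n. normed_subspace (T (ereal (s n))) (N (ereal (s n)))"
    using A1a spos unfolding banach_subspace_def by simp
  have TS: "\<And>n. subspace (T (ereal (s n)))"
    using ns_sub[OF NS] .
  have G: "gamma_converges (\<lambda>n. ext_infty (T (ereal (s n))) (E (ereal (s n)))) (ext_infty (T \<infinity>) (E \<infinity>))"
    using assms(4)[unfolded hypA3_def, rule_format, OF assms(6)] .
  have part1: "ext_infty (T \<infinity>) (E \<infinity>) v \<le> liminf (\<lambda>n. E_disc E W (ereal (s n)) (hs n) (vs n))"
    if vs: "vs \<longlonglongrightarrow> v" for v vs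
  proof -
    have "ext_infty (T \<infinity>) (E \<infinity>) v \<le> liminf (\<lambda>n. ext_infty (T (ereal (s n))) (E (ereal (s n))) (vs n))"
      using G vs unfolding gamma_converges_def by blast
    also have "\<dots> \<le> liminf (\<lambda>n. E_disc E W (ereal (s n)) (hs n) (vs n))"
    proof (intro Liminf_mono always_eventually allI)
      fix n show "ext_infty (T (ereal (s n))) (E (ereal (s n))) (vs n) \<le> E_disc E W (ereal (s n)) (hs n) (vs n)"
        using WT[of n] unfolding E_disc_def ext_infty_def by auto
    qed
    finally show ?thesis .
  qed
  have part2: "\<exists>vs. vs \<longlonglongrightarrow> v \<and> limsup (\<lambda>n. E_disc E W (ereal (s n)) (hs n) (vs n)) \<le> ext_infty (T \<infinity>) (E \<infinity>) v" for v
  proof (cases "v \<in> T \<infinity>")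
    case False
    then show ?thesis by (intro exI[of _ "\<lambda>n. v"]) (simp add: ext_infty_def)
  next
    case True
    obtain v\<sigma> vn where
      v1: "\<And>n. v\<sigma> n \<in> T (ereal (s n))" and v2: "(\<lambda>n. norm (v\<sigma> n - v)) \<longlonglongrightarrow> 0"
      and v3: "(\<lambda>n. E (ereal (s n)) (v\<sigma> n)) \<longlonglongrightarrow> E \<infinity> v"
      and v4: "\<And>n. vn n \<in> W (ereal (s n)) (hs n)"
      and v5: "(\<lambda>n. N (ereal (s n)) (vn n - v\<sigma> n)) \<longlonglongrightarrow> 0"
    proof -
      have A4: "\<forall>h\<in>{0..h0}. \<forall>v\<in>(if h = 0 then T \<infinity> else W \<infinity> h). \<forall>s hs.
        to_infty s \<and> (\<forall>n. hs n \<in> {0<..h0})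
        \<and> (h > 0 \<longrightarrow> (\<forall>n. hs n = h)) \<and> (h = 0 \<longrightarrow> hs \<longlonglongrightarrow> 0) \<longrightarrow>
        (\<exists>v\<sigma> vn. (\<forall>n. v\<sigma> n \<in> T (ereal (s n))) \<and> (\<lambda>n. norm (v\<sigma> n - v)) \<longlonglongrightarrow> 0
           \<and> (\<lambda>n. E (ereal (s n)) (v\<sigma> n)) \<longlonglongrightarrow> E \<infinity> v
           \<and> (\<forall>n. vn n \<in> W (ereal (s n)) (hs n))
           \<and> (\<lambda>n. N (ereal (s n)) (vn n - v\<sigma> n)) \<longlonglongrightarrow> 0)"
        using conjunct2[OF conjunct2[OF conjunct2[OF conjunct2[OF conjunct2[OF assms(5)[unfolded hypA4_def]]]]]] .
      have h0: "0 < h0" using conjunct1[OF assms(5)[unfolded hypA4_def]] .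
      have "\<exists>v\<sigma> vn. (\<forall>n. v\<sigma> n \<in> T (ereal (s n))) \<and> (\<lambda>n. norm (v\<sigma> n - v)) \<longlonglongrightarrow> 0
           \<and> (\<lambda>n. E (ereal (s n)) (v\<sigma> n)) \<longlonglongrightarrow> E \<infinity> v
           \<and> (\<forall>n. vn n \<in> W (ereal (s n)) (hs n))
           \<and> (\<lambda>n. N (ereal (s n)) (vn n - v\<sigma> n)) \<longlonglongrightarrow> 0"
        using True assms(6,7,8) h0 by (intro A4[rule_format, of 0 v s hs]) auto
      then show ?thesis using that by blast
    qed
    obtain M1 where M1: "M1 > 0" "\<And>\<sigma> u. \<sigma> > 0 \<Longrightarrow> u \<in> T \<sigma> \<Longrightarrow> M1 * norm u \<le> N \<sigma> u"
      using conjunct1[OF assms(2)[unfolded hypA1_def]] by blast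
    have vnT: "\<And>n. vn n \<in> T (ereal (s n))" using v4 WT by blast
    have dT: "\<And>n. vn n - v\<sigma> n \<in> T (ereal (s n))" using vnT v1 TS by (simp add: subspace_diff)
    have "(\<lambda>n. vn n - v\<sigma> n) \<longlonglongrightarrow> 0"
    proof (rule Lim_null_comparison)
      show "\<forall>\<^sub>F n in sequentially. norm (vn n - v\<sigma> n) \<le> N (ereal (s n)) (vn n - v\<sigma> n) / M1"
      proof (intro always_eventually allI)
        fix n
        have "M1 * norm (vn n - v\<sigma> n) \<le> N (ereal (s n)) (vn n - v\<sigma> n)"
          using M1(2)[OF _ dT[of n]] spos[of n] by simp
        then show "norm (vn n - v\<sigma> n) \<le> N (ereal (s n)) (vn n - v\<sigma> n) / M1"
          using M1(1) by (simp add: pos_le_divide_eq mult.commute)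
      qed
      show "(\<lambda>n. N (ereal (s n)) (vn n - v\<sigma> n) / M1) \<longlonglongrightarrow> 0"
        using tendsto_divide_zero[OF v5] by simp
    qed
    moreover have "(\<lambda>n. v\<sigma> n - v) \<longlonglongrightarrow> 0" using v2 by (simp add: tendsto_norm_zero_iff)
    ultimately have "(\<lambda>n. (vn n - v\<sigma> n) + (v\<sigma> n - v) + v) \<longlonglongrightarrow> 0 + 0 + v"
      by (intro tendsto_add tendsto_const)
    then have conv: "vn \<longlonglongrightarrow> v" by simp
    obtain p \<alpha> \<psi> where pa: "1 < p" "0 < \<alpha>" "((\<lambda>t. \<psi> t / t powr p) \<longlongrightarrow> 0) at_top"
      and coer: "\<forall>\<sigma>>0. \<forall>u\<in>T \<sigma>. \<alpha> * N \<sigma> u powr p \<le> E \<sigma> u + \<psi> (N \<sigma> u)"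
      using conjunct2[OF conjunct2[OF assms(3)[unfolded hypA2_def]]] by blast
    obtain \<phi> where phic: "continuous_on ({0..} \<times> {0..}) (\<lambda>(s, t). \<phi> s t)"
      and lip: "\<forall>\<sigma>>0. \<forall>u\<in>T \<sigma>. \<forall>v\<in>T \<sigma>. \<bar>E \<sigma> u - E \<sigma> v\<bar> \<le> \<phi> (N \<sigma> u) (N \<sigma> v) * N \<sigma> (u - v)"
      using conjunct1[OF conjunct2[OF assms(3)[unfolded hypA2_def]]] by blast
    obtain R where R: "\<And>t K. 0 \<le> t \<Longrightarrow> \<alpha> * t powr p \<le> K + \<psi> t \<Longrightarrow> t \<le> max R (2 * K / \<alpha>)"
      using coerc_bound[OF pa] by blast
    have "Bseq (\<lambda>n. E (ereal (s n)) (v\<sigma> n))" using v3 by (rule convergent_imp_Bseq[OF convergentI])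
    then obtain K where K: "\<And>n. norm (E (ereal (s n)) (v\<sigma> n)) \<le> K" unfolding Bseq_def by blast
    have "Bseq (\<lambda>n. N (ereal (s n)) (vn n - v\<sigma> n))" using v5 by (rule convergent_imp_Bseq[OF convergentI])
    then obtain K2 where K2: "\<And>n. norm (N (ereal (s n)) (vn n - v\<sigma> n)) \<le> K2" unfolding Bseq_def by blast
    define B where "B = max R (2 * K / \<alpha>)"
    have Nvs: "N (ereal (s n)) (v\<sigma> n) \<le> B" "0 \<le> N (ereal (s n)) (v\<sigma> n)" for n
    proof -
      show nn: "0 \<le> N (ereal (s n)) (v\<sigma> n)" using ns_nonneg[OF NS[of n] v1[of n]] .
      have "\<alpha> * N (ereal (s n)) (v\<sigma> n) powr p \<le> E (ereal (s n)) (v\<sigma> n) + \<psi> (N (ereal (s n)) (v\<sigma> n))"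
        using coer[rule_format, of "ereal (s n)" "v\<sigma> n"] spos[of n] v1[of n] by simp
      also have "\<dots> \<le> K + \<psi> (N (ereal (s n)) (v\<sigma> n))" using K[of n] by simp
      finally show "N (ereal (s n)) (v\<sigma> n) \<le> B" unfolding B_def by (rule R[OF nn])
    qed
    have Nvn: "N (ereal (s n)) (vn n) \<le> B + K2" "0 \<le> N (ereal (s n)) (vn n)" for n
    proof -
      show "0 \<le> N (ereal (s n)) (vn n)" using ns_nonneg[OF NS[of n] vnT[of n]] .
      have "N (ereal (s n)) (v\<sigma> n + (vn n - v\<sigma> n)) \<le> N (ereal (s n)) (v\<sigma> n) + N (ereal (s n)) (vn n - v\<sigma> n)"
        using ns_tri[OF NS[of n] v1[of n] dT[of n]] .
      then show "N (ereal (s n)) (vn n) \<le> B + K2" using Nvs[of n] K2[of n] by simp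
    qed
    define B' where "B' = max B (B + K2)"
    have "compact ((\<lambda>(s, t). \<phi> s t) ` ({0..B'} \<times> {0..B'}))"
      by (rule compact_continuous_image[OF continuous_on_subset[OF phic]]) (auto intro: compact_Times)
    then obtain P where P: "\<And>x. x \<in> (\<lambda>(s, t). \<phi> s t) ` ({0..B'} \<times> {0..B'}) \<Longrightarrow> norm x \<le> P"
      using compact_imp_bounded[of "(\<lambda>(s, t). \<phi> s t) ` ({0..B'} \<times> {0..B'})"] unfolding bounded_iff by blast
    have Pb: "\<bar>\<phi> (N (ereal (s n)) (vn n)) (N (ereal (s n)) (v\<sigma> n))\<bar> \<le> P" for n
    proof -
      have "(N (ereal (s n)) (vn n), N (ereal (s n)) (v\<sigma> n)) \<in> {0..B'} \<times> {0..B'}"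
        using Nvs[of n] Nvn[of n] unfolding B'_def by auto
      then have "\<phi> (N (ereal (s n)) (vn n)) (N (ereal (s n)) (v\<sigma> n)) \<in> (\<lambda>(s, t). \<phi> s t) ` ({0..B'} \<times> {0..B'})"
        by (rule rev_image_eqI) simp
      from P[OF this] show ?thesis by simp
    qed
    have diff: "(\<lambda>n. E (ereal (s n)) (vn n) - E (ereal (s n)) (v\<sigma> n)) \<longlonglongrightarrow> 0"
    proof (rule Lim_null_comparison)
      show "\<forall>\<^sub>F n in sequentially. norm (E (ereal (s n)) (vn n) - E (ereal (s n)) (v\<sigma> n)) \<le> P * N (ereal (s n)) (vn n - v\<sigma> n)"
      proof (intro always_eventually allI)
        fix n
        have nn: "0 \<le> N (ereal (s n)) (vn n - v\<sigma> n)" using ns_nonneg[OF NS[of n] dT[of n]] .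
        have "\<bar>E (ereal (s n)) (vn n) - E (ereal (s n)) (v\<sigma> n)\<bar> \<le> \<phi> (N (ereal (s n)) (vn n)) (N (ereal (s n)) (v\<sigma> n)) * N (ereal (s n)) (vn n - v\<sigma> n)"
          using lip[rule_format, of "ereal (s n)" "vn n" "v\<sigma> n"] spos[of n] vnT[of n] v1[of n] by simp
        also have "\<dots> \<le> P * N (ereal (s n)) (vn n - v\<sigma> n)"
          using Pb[of n] nn by (intro mult_right_mono) auto
        finally show "norm (E (ereal (s n)) (vn n) - E (ereal (s n)) (v\<sigma> n)) \<le> P * N (ereal (s n)) (vn n - v\<sigma> n)" by simp
      qed
      show "(\<lambda>n. P * N (ereal (s n)) (vn n - v\<sigma> n)) \<longlonglongrightarrow> 0"
        using tendsto_mult_right_zero[OF v5] by simp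
    qed
    have "(\<lambda>n. (E (ereal (s n)) (vn n) - E (ereal (s n)) (v\<sigma> n)) + E (ereal (s n)) (v\<sigma> n)) \<longlonglongrightarrow> 0 + E \<infinity> v"
      by (intro tendsto_add diff v3)
    then have "(\<lambda>n. E (ereal (s n)) (vn n)) \<longlonglongrightarrow> E \<infinity> v" by simp
    then have "(\<lambda>n. ereal (E (ereal (s n)) (vn n))) \<longlonglongrightarrow> ereal (E \<infinity> v)" by (rule tendsto_ereal)
    then have "limsup (\<lambda>n. ereal (E (ereal (s n)) (vn n))) = ereal (E \<infinity> v)"
      by (intro lim_imp_Limsup) auto
    moreover have "(\<lambda>n. E_disc E W (ereal (s n)) (hs n) (vn n)) = (\<lambda>n. ereal (E (ereal (s n)) (vn n)))"
      using v4 by (simp add: E_disc_def ext_infty_def)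
    ultimately show ?thesis using conv True by (intro exI[of _ vn]) (simp add: ext_infty_def)
  qed
  show ?thesis unfolding gamma_converges_def by (intro conjI allI impI part1 part2)
qed

end
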